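(* Let $d\ge1$ and $n=2d+1$. (i) If $(0,g)$ is $d$-good for $\gamma(B_{n-2})$, then $(0,g)$ is also $d$-good for $\gamma(B_{n-1})$. (ii) If $(0,g)$ is $(d+1)$-good for $\gamma(B_{n-1})$, then $(0,g)$ is also $(d+1)$-good for $\gamma(B_n)$.
   Context: $B_n$ is the group of signed permutations of $\{\pm1,\dots,\pm n\}$; with $\sigma_0=0$, $\mathrm{des}_B(\sigma)=|\{i\in\{0,\dots,n-1\}:\sigma_i>\sigma_{i+1}\}|$, $B_n(t)=\sum_{\sigma\in B_n}t^{\mathrm{des}_B(\sigma)}=\sum_{i=0}^{\lfloor n/2\rfloor}\gamma_i(B_n)t^i(1+t)^{n-2i}$, and $\gamma(B_n)=(\gamma_0(B_n),\dots,\gamma_{\lfloor n/2\rfloor}(B_n))$. A simplicial complex is $k$-colorable if its vertices can be colored with $k$ colors so that every face has distinctly colored vertices; a $k$-FFK-vector is the $f$-vector $(f_0,f_1,\dots)$ ($f_i$ = number of faces with $i$ vertices, $f_0=1$) of some $k$-colorable complex. Vectors of different lengths are compared and added after padding with zeros on the right. Goodness: let $f=(f_0,\dots,f_m)$ be a vector of nonnegative integers and $g=(g_1,\dots,g_\ell)$. (a) $(0,g)$ is $(m+1)$-good for $f$ if $\ell=m+1$, $g_{m+1}\ne0$, and there are $m$-FFK-vectors $f^{(1)},\dots,f^{(k)}$, each of the form $(f^{(j)}_0,\dots,f^{(j)}_m)$ with $f^{(j)}_i\le f_i$ for all $i$, such that $g_{i+1}=\sum_j f^{(j)}_i$ for $0\le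 i\le m$. (b) $(0,g)$ is $m$-good for $f$ if $\ell=m$, $g_m\neq0$, and there are $(m-1)$-FFK-vectors $f^{(1)},\dots,f^{(k)}$ of the form $(f^{(j)}_0,\dots,f^{(j)}_{m-1})$ with $f_i\ge(i+1)f^{(j)}_i$ for all $i,j$, such that $g_{i+1}=\sum_jf^{(j)}_i$ for $0\le i\le m-1$. Here $\gamma(B_{2d-1})$ has length $d$ and $\gamma(B_{2d}),\gamma(B_{2d+1})$ have length $d+1$. *)

theory Defs
  imports "HOL-Computational_Algebra.Polynomial"
begin

text \<open>A signed permutation of {+-1,...,+-n} is determined by its values on 1..n;
  we represent it as sigma :: nat => int with sigma 0 = 0 (the convention sigma_0 = 0),
  sigma i = 0 outside {1..n}, and |sigma| restricted to {1..n} a bijection onto {1..n}.\<close>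

definition signed_perms :: "nat \<Rightarrow> (nat \<Rightarrow> int) set" where
  "signed_perms n = {\<sigma>. (\<forall>i. i \<notin> {1..n} \<longrightarrow> \<sigma> i = 0) \<and>
       bij_betw (\<lambda>i. nat \<bar>\<sigma> i\<bar>) {1..n} {1..n}}"

definition desB :: "nat \<Rightarrow> (nat \<Rightarrow> int) \<Rightarrow> nat" where
  "desB n \<sigma> = card {i \<in> {0..<n}. \<sigma> i > \<sigma> (Suc i)}"

definition B_poly :: "nat \<Rightarrow> int poly" where
  "B_poly n = (\<Sum>\<sigma>\<in>signed_perms n. monom 1 (desB n \<sigma>))"

definition gammaB :: "nat \<Rightarrow> int list" where
  "gammaB n = (THE g. length g = n div 2 + 1 \<and>
      B_poly n = (\<Sum>i<length g. smult (g ! i) ([:0, 1:] ^ i * [:1, 1:] ^ (n - 2 * i))))"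

definition simplicial_complex :: "nat set set \<Rightarrow> bool" where
  "simplicial_complex \<Delta> \<longleftrightarrow> finite \<Delta> \<and> {} \<in> \<Delta> \<and> (\<forall>F\<in>\<Delta>. finite F) \<and>
      (\<forall>F\<in>\<Delta>. \<forall>G. G \<subseteq> F \<longrightarrow> G \<in> \<Delta>)"

definition colorable :: "nat \<Rightarrow> nat set set \<Rightarrow> bool" where
  "colorable k \<Delta> \<longleftrightarrow> (\<exists>c :: nat \<Rightarrow> nat. (\<forall>v\<in>\<Union>\<Delta>. c v < k) \<and> (\<forall>F\<in>\<Delta>. inj_on c F))"

text \<open>f_i = number of faces with i vertices (so f_0 = 1).\<close>
definition fvec :: "nat set set \<Rightarrow> nat \<Rightarrow> nat" where
  "fvec \<Delta> i = card {F \<in> \<Delta>. card F = i}"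

definition pad :: "'a::zero list \<Rightarrow> nat \<Rightarrow> 'a" where
  "pad xs i = (if i < length xs then xs ! i else 0)"

definition FFK :: "nat \<Rightarrow> nat list \<Rightarrow> bool" where
  "FFK k h \<longleftrightarrow> (\<exists>\<Delta>. simplicial_complex \<Delta> \<and> colorable k \<Delta> \<and> (\<forall>i. pad h i = fvec \<Delta> i))"

text \<open>In all definitions below the list g = [g_1,...,g_l] (0-based list index i holds g_(i+1)),
  and the predicates express "(0,g) is ...-good for f", f = [f_0,...,f_m].\<close>

text \<open>(a): (0,g) is (m+1)-good for f.\<close>
definition good_a :: "nat \<Rightarrow> int list \<Rightarrow> int list \<Rightarrow> bool" where
  "good_a m f g \<longleftrightarrow> length f = m + 1 \<and> length g = m + 1 \<and> g ! m \<noteq> 0 \<and>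
     (\<exists>hs :: nat list list.
        (\<forall>h\<in>set hs. length h = m + 1 \<and> FFK m h \<and> (\<forall>i\<le>m. int (h ! i) \<le> f ! i)) \<and>
        (\<forall>i\<le>m. g ! i = (\<Sum>h\<leftarrow>hs. int (h ! i))))"

text \<open>(b): (0,g) is m-good for f.\<close>
definition good_b :: "nat \<Rightarrow> int list \<Rightarrow> int list \<Rightarrow> bool" where
  "good_b m f g \<longleftrightarrow> length f = m + 1 \<and> length g = m \<and> g ! (m - 1) \<noteq> 0 \<and>
     (\<exists>hs :: nat list list.
        (\<forall>h\<in>set hs. length h = m \<and> FFK (m - 1) h \<and>
            (\<forall>i<m. int (i + 1) * int (h ! i) \<le> f ! i)) \<and>
        (\<forall>i<m. g ! i = (\<Sum>h\<leftarrow>hs. int (h ! i))))"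

definition good :: "nat \<Rightarrow> int list \<Rightarrow> int list \<Rightarrow> bool" where
  "good k f g \<longleftrightarrow> (if length f = k then good_a (k - 1) f g
                    else if length f = k + 1 then good_b k f g else False)"

end

theory Submission
  imports Defs
begin


abbreviation SP where "SP \<equiv> signed_perms"

lemma SP_zero: "\<sigma> \<in> SP m \<Longrightarrow> i \<notin> {1..m} \<Longrightarrow> \<sigma> i = 0"
  by (simp add: signed_perms_def)

lemma SP_bij: "\<sigma> \<in> SP m \<Longrightarrow> bij_betw (\<lambda>i. nat \<bar>\<sigma> i\<bar>) {1..m} {1..m}"
  by (simp add: signed_perms_def)

lemma SP_in: "\<sigma> \<in> SP m \<Longrightarrow> i \<in> {1..m} \<Longrightarrow> nat \<bar>\<sigma> i\<bar> \<in> {1..m}"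
  using SP_bij bij_betwE by blast

lemma SP_abs: "\<sigma> \<in> SP m \<Longrightarrow> \<bar>\<sigma> i\<bar> \<le> int m"
proof (cases "i \<in> {1..m}")
  case True
  assume "\<sigma> \<in> SP m"
  from SP_in[OF this True] show ?thesis by auto
next
  case False
  assume "\<sigma> \<in> SP m"
  then show ?thesis using SP_zero[of \<sigma> m i] False by auto
qed

lemma SP_I:
  assumes "\<And>i. i \<notin> {1..m} \<Longrightarrow> \<sigma> i = 0"
    and "(\<lambda>i. nat \<bar>\<sigma> i\<bar>) ` {1..m} = {1..m}"
  shows "\<sigma> \<in> SP m"
proof -
  have "inj_on (\<lambda>i. nat \<bar>\<sigma> i\<bar>) {1..m}"
    apply (rule eq_card_imp_inj_on)
     apply simp
    apply (subst assms(2)) apply simp done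
  then show ?thesis using assms unfolding signed_perms_def bij_betw_def by auto
qed

lemma SP_finite: "finite (SP m)"
proof -
  have "SP m \<subseteq> {f. \<forall>x. (x \<in> {1..m} \<longrightarrow> f x \<in> {-int m..int m}) \<and> (x \<notin> {1..m} \<longrightarrow> f x = 0)}"
  proof
    fix f assume f: "f \<in> SP m"
    show "f \<in> {f. \<forall>x. (x \<in> {1..m} \<longrightarrow> f x \<in> {-int m..int m}) \<and> (x \<notin> {1..m} \<longrightarrow> f x = 0)}"
    proof (intro CollectI allI conjI impI)
      fix x show "f x \<in> {-int m..int m}" using SP_abs[OF f, of x] by (simp add: abs_le_iff)
    next
      fix x assume "x \<notin> {1..m}" then show "f x = 0" using SP_zero[OF f] by blast
    qed
  qed
  then show ?thesis using finite_set_of_finite_funs[of "{1..m}" "{-int m..int m}" 0]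
    using finite_subset by blast
qed

definition ins :: "nat \<Rightarrow> (nat \<Rightarrow> int) \<Rightarrow> nat \<Rightarrow> bool \<Rightarrow> nat \<Rightarrow> int" where
  "ins m \<sigma> j b = (\<lambda>i. if i \<le> j then \<sigma> i else if i = Suc j then (if b then int (Suc m) else - int (Suc m))
      else if i \<le> Suc m then \<sigma> (i - 1) else 0)"

lemma ins_mem:
  assumes s: "\<sigma> \<in> SP m" and j: "j \<le> m"
  shows "ins m \<sigma> j b \<in> SP (Suc m)"
proof (rule SP_I)
  fix i :: nat assume "i \<notin> {1..Suc m}"
  then have "i = 0 \<or> i > Suc m" by auto
  then show "ins m \<sigma> j b i = 0" using SP_zero[OF s, of 0] j by (auto simp: ins_def)
next
  show "(\<lambda>i. nat \<bar>ins m \<sigma> j b i\<bar>) ` {1..Suc m} = {1..Suc m}"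
  proof
    show "(\<lambda>i. nat \<bar>ins m \<sigma> j b i\<bar>) ` {1..Suc m} \<subseteq> {1..Suc m}"
    proof
      fix v assume "v \<in> (\<lambda>i. nat \<bar>ins m \<sigma> j b i\<bar>) ` {1..Suc m}"
      then obtain i where i: "i \<in> {1..Suc m}" "v = nat \<bar>ins m \<sigma> j b i\<bar>" by auto
      consider "i \<le> j" | "i = Suc j" | "i > Suc j" by linarith
      then show "v \<in> {1..Suc m}"
      proof cases
        case 1 then have "i \<in> {1..m}" using i j by auto
        from SP_in[OF s this] show ?thesis using 1 i by (auto simp: ins_def)
      next
        case 2 then show ?thesis using i by (auto simp: ins_def)
      next
        case 3 then have "i - 1 \<in> {1..m}" using i j by auto
        from SP_in[OF s this] show ?thesis using 3 i by (auto simp: ins_def)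
      qed
    qed
  next
    show "{1..Suc m} \<subseteq> (\<lambda>i. nat \<bar>ins m \<sigma> j b i\<bar>) ` {1..Suc m}"
    proof
      fix v assume v: "v \<in> {1..Suc m}"
      show "v \<in> (\<lambda>i. nat \<bar>ins m \<sigma> j b i\<bar>) ` {1..Suc m}"
      proof (cases "v = Suc m")
        case True
        then have "nat \<bar>ins m \<sigma> j b (Suc j)\<bar> = v" by (auto simp: ins_def)
        then show ?thesis using j by (intro image_eqI[of _ _ "Suc j"]) simp_all
      next
        case False
        then have "v \<in> {1..m}" using v by auto
        then have "v \<in> (\<lambda>i. nat \<bar>\<sigma> i\<bar>) ` {1..m}" using SP_bij[OF s] by (simp add: bij_betw_def)
        then obtain i where i: "i \<in> {1..m}" "nat \<bar>\<sigma> i\<bar> = v" by blast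
        show ?thesis
        proof (cases "i \<le> j")
          case True
          then have "nat \<bar>ins m \<sigma> j b i\<bar> = v" using i by (auto simp: ins_def)
          then show ?thesis using i by (intro image_eqI[of _ _ i]) simp_all
        next
          case False
          then have "nat \<bar>ins m \<sigma> j b (Suc i)\<bar> = v" using i by (auto simp: ins_def)
          then show ?thesis using i by (intro image_eqI[of _ _ "Suc i"]) simp_all
        qed
      qed
    qed
  qed
qed


lemma ins_surj:
  assumes t: "\<tau> \<in> SP (Suc m)"
  shows "\<exists>\<sigma>\<in>SP m. \<exists>j\<le>m. \<exists>b. \<tau> = ins m \<sigma> j b"
proof -
  have "Suc m \<in> (\<lambda>i. nat \<bar>\<tau> i\<bar>) ` {1..Suc m}" using SP_bij[OF t] by (simp add: bij_betw_def)
  then obtain p where p1: "p \<in> {1..Suc m}" and p2: "Suc m = nat \<bar>\<tau> p\<bar>" by blast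
  have p: "p \<in> {1..Suc m}" "nat \<bar>\<tau> p\<bar> = Suc m" using p1 p2 by auto
  have inj: "inj_on (\<lambda>i. nat \<bar>\<tau> i\<bar>) {1..Suc m}" using SP_bij[OF t] by (simp add: bij_betw_def)
  have pu: "q = p" if "q \<in> {1..Suc m}" "nat \<bar>\<tau> q\<bar> = Suc m" for q
    using inj p that unfolding inj_on_def by metis
  define \<sigma> where "\<sigma> = (\<lambda>i. if i < p then \<tau> i else if i \<le> m then \<tau> (Suc i) else 0)"
  have s: "\<sigma> \<in> SP m"
  proof (rule SP_I)
    fix i :: nat assume "i \<notin> {1..m}"
    then have "i = 0 \<or> i > m" by auto
    then show "\<sigma> i = 0" using SP_zero[OF t, of 0] p by (auto simp: \<sigma>_def)
  next
    show "(\<lambda>i. nat \<bar>\<sigma> i\<bar>) ` {1..m} = {1..m}"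
    proof
      show "(\<lambda>i. nat \<bar>\<sigma> i\<bar>) ` {1..m} \<subseteq> {1..m}"
      proof
        fix v assume "v \<in> (\<lambda>i. nat \<bar>\<sigma> i\<bar>) ` {1..m}"
        then obtain i where i: "i \<in> {1..m}" "v = nat \<bar>\<sigma> i\<bar>" by blast
        show "v \<in> {1..m}"
        proof (cases "i < p")
          case True
          then have "i \<in> {1..Suc m}" using i by auto
          moreover have "v = nat \<bar>\<tau> i\<bar>" using True i by (simp add: \<sigma>_def)
          ultimately show ?thesis using SP_in[OF t, of i] pu[of i] True by fastforce
        next
          case False
          then have "Suc i \<in> {1..Suc m}" using i by auto
          moreover have "v = nat \<bar>\<tau> (Suc i)\<bar>" using False i by (simp add: \<sigma>_def)
          ultimately show ?thesis using SP_in[OF t, of "Suc i"] pu[of "Suc i"] False by fastforce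
        qed
      qed
    next
      show "{1..m} \<subseteq> (\<lambda>i. nat \<bar>\<sigma> i\<bar>) ` {1..m}"
      proof
        fix v assume v: "v \<in> {1..m}"
        then have "v \<in> (\<lambda>i. nat \<bar>\<tau> i\<bar>) ` {1..Suc m}" using SP_bij[OF t] by (simp add: bij_betw_def)
        then obtain q where q1: "q \<in> {1..Suc m}" and q2: "v = nat \<bar>\<tau> q\<bar>" by blast
        have q: "q \<in> {1..Suc m}" "nat \<bar>\<tau> q\<bar> = v" using q1 q2 by auto
        have "q \<noteq> p" using q p v by auto
        show "v \<in> (\<lambda>i. nat \<bar>\<sigma> i\<bar>) ` {1..m}"
        proof (cases "q < p")
          case True
          then have "nat \<bar>\<sigma> q\<bar> = v" using q by (simp add: \<sigma>_def)
          then show ?thesis using q p True by (intro image_eqI[of _ _ q]) simp_all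
        next
          case False
          have "p \<le> q - 1" "q - 1 \<le> m" "Suc (q - 1) = q" using q \<open>q \<noteq> p\<close> False p by auto
          then have "nat \<bar>\<sigma> (q - 1)\<bar> = v" using q by (simp add: \<sigma>_def)
          moreover have "q - 1 \<in> {1..m}" using q p False \<open>q \<noteq> p\<close> by auto
          ultimately show ?thesis by (intro image_eqI[of _ _ "q - 1"]) simp_all
        qed
      qed
    qed
  qed
  have "\<tau> = ins m \<sigma> (p - 1) (\<tau> p > 0)"
  proof
    fix i
    consider "i < p" | "i = p" | "p < i" "i \<le> Suc m" | "i > Suc m" by linarith
    then show "\<tau> i = ins m \<sigma> (p - 1) (\<tau> p > 0) i"
    proof cases
      case 1 then have "i \<le> p - 1" by simp
      then show ?thesis using 1 by (simp add: ins_def \<sigma>_def)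
    next
      case 2
      have "\<tau> p = int (Suc m) \<or> \<tau> p = - int (Suc m)" using p(2) by linarith
      then show ?thesis using 2 p(1) by (auto simp: ins_def \<sigma>_def)
    next
      case 3 then show ?thesis using p(1) by (auto simp: ins_def \<sigma>_def)
    next
      case 4 then show ?thesis using p(1) SP_zero[OF t, of i] by (auto simp: ins_def \<sigma>_def)
    qed
  qed
  then show ?thesis using s p(1) by (intro bexI[of _ \<sigma>] exI[of _ "p - 1"]) auto
qed

lemma ins_inj:
  assumes s: "\<sigma> \<in> SP m" and s': "\<sigma>' \<in> SP m" and j: "j \<le> m" and j': "j' \<le> m"
    and e: "ins m \<sigma> j b = ins m \<sigma>' j' b'"
  shows "\<sigma> = \<sigma>' \<and> j = j' \<and> b = b'"
proof -
  have e1: "ins m \<sigma> j b i = ins m \<sigma>' j' b' i" for i using e by simp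
  have a1: "\<bar>ins m \<sigma> j b (Suc j)\<bar> = int (Suc m)" by (simp add: ins_def)
  have jj: "j = j'"
  proof (rule ccontr)
    assume "j \<noteq> j'"
    then have "\<bar>ins m \<sigma>' j' b' (Suc j)\<bar> \<le> int m"
      using SP_abs[OF s', of "Suc j"] SP_abs[OF s', of j] by (auto simp: ins_def)
    then show False using a1 e1[of "Suc j"] by simp
  qed
  have bb: "b = b'" using e1[of "Suc j"] jj by (auto simp: ins_def split: if_splits)
  have "\<sigma> i = \<sigma>' i" for i
  proof -
    consider "i \<le> j" | "j < i" "i \<le> m" | "i > m" by linarith
    then show ?thesis
    proof cases
      case 1 then show ?thesis using e1[of i] jj by (simp add: ins_def)
    next
      case 2 then show ?thesis using e1[of "Suc i"] jj by (simp add: ins_def)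
    next
      case 3 then show ?thesis using SP_zero[OF s, of i] SP_zero[OF s', of i] by simp
    qed
  qed
  then show ?thesis using jj bb by auto
qed


definition dl :: "(nat \<Rightarrow> int) \<Rightarrow> nat \<Rightarrow> nat" where
  "dl f i = (if f (Suc i) < f i then 1 else 0)"

lemma desB_sum: "desB n \<sigma> = (\<Sum>i\<in>{0..<n}. dl \<sigma> i)"
proof -
  have "desB n \<sigma> = (\<Sum>i\<in>{i \<in> {0..<n}. \<sigma> i > \<sigma> (Suc i)}. 1)" by (simp add: desB_def)
  also have "\<dots> = (\<Sum>i\<in>{0..<n}. if \<sigma> i > \<sigma> (Suc i) then 1 else 0)"
    by (rule sum.inter_filter) simp
  finally show ?thesis by (simp add: dl_def)
qed

lemma desB_le: "desB n \<sigma> \<le> n"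
proof -
  have "desB n \<sigma> \<le> card {0..<n}" unfolding desB_def by (rule card_mono) auto
  then show ?thesis by simp
qed

lemma desB_ins:
  assumes s: "\<sigma> \<in> SP m" and j: "j \<le> m"
  shows "desB (Suc m) (ins m \<sigma> j b) + (if j < m then dl \<sigma> j else 0)
       = desB m \<sigma> + (if b then 0 else 1) + (if j < m \<and> b then 1 else 0)"
proof -
  define \<tau> where "\<tau> = ins m \<sigma> j b"
  have dj: "dl \<tau> j = (if b then 0 else 1)"
    using SP_abs[OF s, of j] by (auto simp: dl_def \<tau>_def ins_def)
  show ?thesis
  proof (cases "j = m")
    case True
    have "desB (Suc m) \<tau> = (\<Sum>i\<in>{0..<m}. dl \<tau> i) + dl \<tau> m"
      by (simp add: desB_sum)
    also have "(\<Sum>i\<in>{0..<m}. dl \<tau> i) = (\<Sum>i\<in>{0..<m}. dl \<sigma> i)"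
      by (rule sum.cong) (auto simp: dl_def \<tau>_def ins_def True)
    finally show ?thesis using dj True by (simp add: desB_sum \<tau>_def)
  next
    case False
    then have jm: "j < m" using j by simp
    have "desB (Suc m) \<tau> = (\<Sum>i\<in>{0..<j}. dl \<tau> i) + (\<Sum>i\<in>{j..<Suc m}. dl \<tau> i)"
      unfolding desB_sum using jm by (simp add: sum.atLeastLessThan_concat)
    also have "(\<Sum>i\<in>{j..<Suc m}. dl \<tau> i) = dl \<tau> j + (dl \<tau> (Suc j) + (\<Sum>i\<in>{Suc (Suc j)..<Suc m}. dl \<tau> i))"
    proof -
      have "(\<Sum>i\<in>{j..<Suc m}. dl \<tau> i) = dl \<tau> j + (\<Sum>i\<in>{Suc j..<Suc m}. dl \<tau> i)"
        using jm by (intro sum.atLeast_Suc_lessThan) simp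
      moreover have "(\<Sum>i\<in>{Suc j..<Suc m}. dl \<tau> i) = dl \<tau> (Suc j) + (\<Sum>i\<in>{Suc (Suc j)..<Suc m}. dl \<tau> i)"
        using jm by (intro sum.atLeast_Suc_lessThan) simp
      ultimately show ?thesis by simp
    qed
    also have "(\<Sum>i\<in>{Suc (Suc j)..<Suc m}. dl \<tau> i) = (\<Sum>i\<in>{Suc j..<m}. dl \<tau> (Suc i))"
      by (simp only: sum.atLeast_Suc_lessThan_Suc_shift comp_def)
    also have "\<dots> = (\<Sum>i\<in>{Suc j..<m}. dl \<sigma> i)"
      by (rule sum.cong) (auto simp: dl_def \<tau>_def ins_def)
    also have "(\<Sum>i\<in>{0..<j}. dl \<tau> i) = (\<Sum>i\<in>{0..<j}. dl \<sigma> i)"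
      by (rule sum.cong) (auto simp: dl_def \<tau>_def ins_def)
    also have "dl \<tau> (Suc j) = (if b then 1 else 0)"
      using SP_abs[OF s, of "Suc j"] jm by (auto simp: dl_def \<tau>_def ins_def)
    finally have A: "desB (Suc m) \<tau> = (\<Sum>i\<in>{0..<j}. dl \<sigma> i) + (dl \<tau> j + ((if b then 1 else 0) + (\<Sum>i\<in>{Suc j..<m}. dl \<sigma> i)))" .
    have B: "desB m \<sigma> = (\<Sum>i\<in>{0..<j}. dl \<sigma> i) + (dl \<sigma> j + (\<Sum>i\<in>{Suc j..<m}. dl \<sigma> i))"
    proof -
      have "(\<Sum>i\<in>{j..<m}. dl \<sigma> i) = dl \<sigma> j + (\<Sum>i\<in>{Suc j..<m}. dl \<sigma> i)"
        using jm by (intro sum.atLeast_Suc_lessThan) simp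
      moreover have "(\<Sum>i\<in>{0..<m}. dl \<sigma> i) = (\<Sum>i\<in>{0..<j}. dl \<sigma> i) + (\<Sum>i\<in>{j..<m}. dl \<sigma> i)"
        using jm by (intro sum.atLeastLessThan_concat[symmetric]) simp_all
      ultimately show ?thesis unfolding desB_sum by simp
    qed
    show ?thesis using A B dj jm by (simp add: \<tau>_def)
  qed
qed


definition Lmon :: "nat \<Rightarrow> nat \<Rightarrow> int poly" where
  "Lmon m k = of_nat (2*k+1) * monom 1 k + of_nat (2*(m-k)+1) * monom 1 (Suc k)"

lemma dl01: "dl f i = 0 \<or> dl f i = 1" by (simp add: dl_def)

lemma fiber:
  assumes s: "\<sigma> \<in> SP m"
  shows "(\<Sum>j\<in>{0..m}. \<Sum>b\<in>UNIV. monom 1 (desB (Suc m) (ins m \<sigma> j b)) :: int poly) = Lmon m (desB m \<sigma>)"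
proof -
  define k where "k = desB m \<sigma>"
  define A :: "int poly" where "A = monom 1 k"
  define B :: "int poly" where "B = monom 1 (Suc k)"
  have jlt: "(\<Sum>b\<in>UNIV. monom 1 (desB (Suc m) (ins m \<sigma> j b)) :: int poly)
        = 2 * B + of_nat (dl \<sigma> j) * (2 * A - 2 * B)" if "j < m" for j
  proof -
    have e: "desB (Suc m) (ins m \<sigma> j b) + dl \<sigma> j = Suc k" for b
      using desB_ins[OF s, of j b] that by (cases b) (auto simp: k_def)
    show ?thesis
    proof (cases "dl \<sigma> j = 0")
      case True
      then show ?thesis using e by (simp add: UNIV_bool A_def B_def)
    next
      case False
      then have "dl \<sigma> j = 1" using dl01 by metis
      then show ?thesis using e[of True] e[of False] by (simp add: UNIV_bool A_def B_def)
    qed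
  qed
  have jm: "(\<Sum>b\<in>UNIV. monom 1 (desB (Suc m) (ins m \<sigma> m b)) :: int poly) = A + B"
    using desB_ins[OF s, of m True] desB_ins[OF s, of m False]
    by (simp add: UNIV_bool A_def B_def k_def)
  have "(\<Sum>j\<in>{0..m}. \<Sum>b\<in>UNIV. monom 1 (desB (Suc m) (ins m \<sigma> j b)) :: int poly)
     = (\<Sum>j\<in>{0..<m}. \<Sum>b\<in>UNIV. monom 1 (desB (Suc m) (ins m \<sigma> j b))) + (A + B)"
    by (simp add: atLeastLessThanSuc_atLeastAtMost[symmetric] sum.atLeast0_lessThan_Suc jm del: atLeastLessThanSuc_atLeastAtMost)
  also have "(\<Sum>j\<in>{0..<m}. \<Sum>b\<in>UNIV. monom 1 (desB (Suc m) (ins m \<sigma> j b)) :: int poly)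
     = (\<Sum>j\<in>{0..<m}. 2 * B + of_nat (dl \<sigma> j) * (2 * A - 2 * B))"
    by (rule sum.cong) (simp_all add: jlt)
  also have "\<dots> = of_nat m * (2 * B) + of_nat k * (2 * A - 2 * B)"
  proof -
    have "(\<Sum>j\<in>{0..<m}. 2 * B + of_nat (dl \<sigma> j) * (2 * A - 2 * B))
       = (\<Sum>j\<in>{0..<m}. 2 * B) + (\<Sum>j\<in>{0..<m}. of_nat (dl \<sigma> j)) * (2 * A - 2 * B)"
      by (simp only: sum.distrib sum_distrib_right)
    also have "(\<Sum>j\<in>{0..<m}. of_nat (dl \<sigma> j)) = (of_nat k :: int poly)"
      by (simp only: of_nat_sum[symmetric] desB_sum k_def)
    finally show ?thesis by simp
  qed
  finally have "(\<Sum>j\<in>{0..m}. \<Sum>b\<in>UNIV. monom 1 (desB (Suc m) (ins m \<sigma> j b)) :: int poly)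
     = of_nat m * (2 * B) + of_nat k * (2 * A - 2 * B) + (A + B)" .
  moreover have "k \<le> m" using desB_le k_def by simp
  moreover have "(of_nat (2*(m-k)+1) :: int poly) = 2 * of_nat m - 2 * of_nat k + 1"
    using \<open>k \<le> m\<close> by (simp add: of_nat_diff)
  moreover have "(of_nat (2*k+1) :: int poly) = 2 * of_nat k + 1" by simp
  ultimately show ?thesis unfolding Lmon_def k_def[symmetric] A_def[symmetric] B_def[symmetric]
    by (simp add: algebra_simps)
qed


lemma B_poly_Suc: "B_poly (Suc m) = (\<Sum>\<sigma>\<in>SP m. Lmon m (desB m \<sigma>))"
proof -
  have inj: "inj_on (\<lambda>(\<sigma>, j, b). ins m \<sigma> j b) (SP m \<times> ({0..m} \<times> UNIV))"
  proof (rule inj_onI)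
    fix x y assume x: "x \<in> SP m \<times> ({0..m} \<times> UNIV)" and y: "y \<in> SP m \<times> ({0..m} \<times> UNIV)"
      and e: "(\<lambda>(\<sigma>, j, b). ins m \<sigma> j b) x = (\<lambda>(\<sigma>, j, b). ins m \<sigma> j b) y"
    obtain \<sigma> j b where xx: "x = (\<sigma>, j, b)" by (cases x) auto
    obtain \<sigma>' j' b' where yy: "y = (\<sigma>', j', b')" by (cases y) auto
    have "\<sigma> = \<sigma>' \<and> j = j' \<and> b = b'"
      using x y e unfolding xx yy by (intro ins_inj[of \<sigma> m \<sigma>' j j' b b']) auto
    then show "x = y" using xx yy by simp
  qed
  have im: "(\<lambda>(\<sigma>, j, b). ins m \<sigma> j b) ` (SP m \<times> ({0..m} \<times> UNIV)) = SP (Suc m)"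
  proof
    show "(\<lambda>(\<sigma>, j, b). ins m \<sigma> j b) ` (SP m \<times> ({0..m} \<times> UNIV)) \<subseteq> SP (Suc m)"
    proof
      fix \<tau> assume "\<tau> \<in> (\<lambda>(\<sigma>, j, b). ins m \<sigma> j b) ` (SP m \<times> ({0..m} \<times> UNIV))"
      then obtain \<sigma> j b where "\<sigma> \<in> SP m" "j \<le> m" "\<tau> = ins m \<sigma> j b" by auto
      then show "\<tau> \<in> SP (Suc m)" using ins_mem by simp
    qed
  next
    show "SP (Suc m) \<subseteq> (\<lambda>(\<sigma>, j, b). ins m \<sigma> j b) ` (SP m \<times> ({0..m} \<times> UNIV))"
    proof
      fix \<tau> assume "\<tau> \<in> SP (Suc m)"
      from ins_surj[OF this] obtain \<sigma> j b where "\<sigma> \<in> SP m" "j \<le> m" "\<tau> = ins m \<sigma> j b" by blast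
      then show "\<tau> \<in> (\<lambda>(\<sigma>, j, b). ins m \<sigma> j b) ` (SP m \<times> ({0..m} \<times> UNIV))"
        by (intro image_eqI[of _ _ "(\<sigma>, j, b)"]) auto
    qed
  qed
  have "B_poly (Suc m) = (\<Sum>\<tau>\<in>SP (Suc m). monom 1 (desB (Suc m) \<tau>))" by (simp add: B_poly_def)
  also have "\<dots> = (\<Sum>x\<in>SP m \<times> ({0..m} \<times> UNIV). monom 1 (desB (Suc m) ((\<lambda>(\<sigma>, j, b). ins m \<sigma> j b) x)))"
    by (subst im[symmetric], subst sum.reindex[OF inj]) (simp only: comp_def)
  also have "\<dots> = (\<Sum>\<sigma>\<in>SP m. \<Sum>j\<in>{0..m}. \<Sum>b\<in>UNIV. monom 1 (desB (Suc m) (ins m \<sigma> j b)))"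
    by (simp only: sum.cartesian_product' case_prod_conv)
  also have "\<dots> = (\<Sum>\<sigma>\<in>SP m. Lmon m (desB m \<sigma>))"
    by (rule sum.cong) (rule refl, rule fiber)
  finally show ?thesis .
qed



definition XX :: "int poly" where "XX = [:0,1:]"

definition L :: "nat \<Rightarrow> int poly \<Rightarrow> int poly" where
  "L m f = f + of_nat (2*m+1) * (XX * f) + 2 * ((1 - XX) * (XX * pderiv f))"

lemma YY_eq: "[:1,1::int:] = 1 + XX" by (simp add: one_pCons XX_def)

lemma pderiv_XX: "pderiv XX = 1" by (simp add: pderiv_pCons one_pCons XX_def)
lemma pderiv_YY: "pderiv (1 + XX) = 1" by (simp add: pderiv_add pderiv_XX)

lemma smult_of_int: "smult c p = of_int c * p" by (simp add: of_int_poly)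
lemma smult_of_nat: "smult (of_nat c) p = of_nat c * p" by (simp add: of_nat_poly)

lemma X_pderiv_pow: "XX * pderiv (XX ^ i) = of_nat i * XX ^ i"
proof (cases i)
  case 0 then show ?thesis by simp
next
  case (Suc i')
  have "XX * pderiv (XX ^ i) = XX * (of_nat (Suc i') * XX ^ i')"
    unfolding Suc pderiv_power_Suc pderiv_XX smult_of_nat by simp
  then show ?thesis using Suc by (simp add: algebra_simps)
qed

lemma pderiv_YY_pow: "pderiv ((1 + XX) ^ Suc r) = of_nat (Suc r) * (1 + XX) ^ r"
  unfolding pderiv_power_Suc pderiv_YY smult_of_nat by simp

lemma pderiv_sum_gen: "pderiv (sum f A) = (\<Sum>x\<in>A. pderiv (f x))"
  by (induct A rule: infinite_finite_induct) (simp_all add: pderiv_add)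

lemma L_sum: "L m (sum f A) = (\<Sum>x\<in>A. L m (f x))"
  by (simp add: L_def pderiv_sum_gen sum.distrib sum_distrib_left)

lemma L_smult: "L m (smult c f) = smult c (L m f)"
  by (simp only: L_def pderiv_smult) (simp add: smult_of_int algebra_simps)

lemma L_monom: "k \<le> m \<Longrightarrow> L m (monom 1 k) = Lmon m k"
proof -
  assume k: "k \<le> m"
  have mk: "monom 1 k = XX ^ k" by (simp add: monom_altdef XX_def)
  have ms: "monom 1 (Suc k) = XX ^ Suc k" by (simp add: monom_altdef XX_def)
  show ?thesis unfolding L_def Lmon_def mk ms of_nat_add of_nat_mult of_nat_diff[OF k]
    by (simp add: X_pderiv_pow algebra_simps)
qed

lemma ring_id1:
  fixes x a :: "'a::comm_ring_1"
  shows "a + of_nat (2*(2*i)+1) * (x * a) + 2 * ((1 - x) * (of_nat i * a))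
     = of_int (2 * int i + 1) * (a * (1 + x))"
  by (simp add: algebra_simps)

lemma ring_id2:
  fixes x a b :: "'a::comm_ring_1"
  shows "a * ((1 + x) * b) + of_nat (2*(2*i + Suc r)+1) * (x * (a * ((1 + x) * b)))
     + 2 * ((1 - x) * (a * x * (of_nat (Suc r) * b) + (1 + x) * b * (of_nat i * a)))
     = of_int (2 * int i + 1) * (a * ((1 + x) * ((1 + x) * b)))
      + of_int (4 * (int (2*i + Suc r) - 2 * int i)) * (x * a * b)"
  by (simp add: algebra_simps)


lemma L_p:
  assumes "2 * i \<le> m"
  shows "L m (XX^i * (1+XX)^(m - 2*i)) = smult (2 * int i + 1) (XX^i * (1+XX)^(Suc m - 2*i))
     + smult (4 * (int m - 2 * int i)) (XX^Suc i * (1+XX)^(Suc m - 2 * Suc i))"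
proof -
  obtain r where m: "m = 2*i + r" using assms le_Suc_ex by blast
  show ?thesis
  proof (cases r)
    case 0
    have "L m (XX^i * (1+XX)^(m - 2*i)) = XX^i + of_nat (2*(2*i)+1) * (XX * XX^i) + 2 * ((1 - XX) * (of_nat i * XX^i))"
      unfolding L_def using m 0 by (simp add: X_pderiv_pow)
    also have "\<dots> = of_int (2 * int i + 1) * (XX^i * (1 + XX))" by (rule ring_id1)
    finally show ?thesis using m 0 by (simp add: smult_of_int)
  next
    case (Suc r')
    have d: "XX * pderiv (XX^i * (1+XX)^(Suc r')) = XX^i * XX * (of_nat (Suc r') * (1+XX)^r') + (1+XX)^(Suc r') * (of_nat i * XX^i)"
      unfolding pderiv_mult pderiv_YY_pow X_pderiv_pow[symmetric] by (simp add: algebra_simps)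
    have "L m (XX^i * (1+XX)^(m - 2*i)) = XX^i * ((1+XX) * (1+XX)^r') + of_nat (2*(2*i + Suc r')+1) * (XX * (XX^i * ((1+XX) * (1+XX)^r')))
       + 2 * ((1 - XX) * (XX^i * XX * (of_nat (Suc r') * (1+XX)^r') + (1+XX) * (1+XX)^r' * (of_nat i * XX^i)))"
      unfolding L_def using m Suc d by simp
    also have "\<dots> = of_int (2 * int i + 1) * (XX^i * ((1 + XX) * ((1 + XX) * (1+XX)^r')))
      + of_int (4 * (int (2*i + Suc r') - 2 * int i)) * (XX * XX^i * (1+XX)^r')" by (rule ring_id2)
    finally show ?thesis using m Suc by (simp add: smult_of_int)
  qed
qed

fun G :: "nat \<Rightarrow> nat \<Rightarrow> int" where
  "G 0 i = (if i = 0 then 1 else 0)"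
| "G (Suc m) i = (2 * int i + 1) * G m i + (if i = 0 then 0 else 4 * (int m + 2 - 2 * int i) * G m (i - 1))"

lemma G_facts: "(\<forall>i. m div 2 < i \<longrightarrow> G m i = 0) \<and> (\<forall>i. G m i \<ge> 0)"
proof (induction m)
  case 0 then show ?case by simp
next
  case (Suc m)
  have z: "G m i = 0" if "m div 2 < i" for i using Suc that by blast
  have nn: "G m i \<ge> 0" for i using Suc by blast
  have sec: "(if i = 0 then 0 else 4 * (int m + 2 - 2 * int i) * G m (i - 1)) \<ge> 0" for i
  proof (cases "i = 0")
    case False
    show ?thesis
    proof (cases "m div 2 < i - 1")
      case True then show ?thesis using z by simp
    next
      case F: False
      then have "2 * (i - 1) \<le> m" by linarith
      then have "int m + 2 - 2 * int i \<ge> 0" using False by linarith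
      then show ?thesis using nn[of "i - 1"] False by simp
    qed
  qed simp
  have "G (Suc m) i = 0" if "Suc m div 2 < i" for i
  proof -
    have "G m i = 0" using that z by (intro z) linarith
    moreover have "(if i = 0 then 0 else 4 * (int m + 2 - 2 * int i) * G m (i - 1)) = 0"
    proof (cases "m div 2 < i - 1")
      case True then show ?thesis using z by simp
    next
      case False
      then have "int m + 2 - 2 * int i = 0" using that by linarith
      then show ?thesis by simp
    qed
    ultimately show ?thesis by simp
  qed
  moreover have "G (Suc m) i \<ge> 0" for i using nn[of i] sec[of i] by simp
  ultimately show ?case by blast
qed

lemma G_zero: "m div 2 < i \<Longrightarrow> G m i = 0" using G_facts by blast
lemma G_nonneg: "G m i \<ge> 0" using G_facts by blast

lemma G_mono: "G (Suc m) i \<ge> (2 * int i + 1) * G m i"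
proof -
  have "(if i = 0 then 0 else 4 * (int m + 2 - 2 * int i) * G m (i - 1)) \<ge> 0"
  proof (cases "i = 0")
    case False
    show ?thesis
    proof (cases "m div 2 < i - 1")
      case True then show ?thesis using G_zero by simp
    next
      case F: False
      then have "int m + 2 - 2 * int i \<ge> 0" using False by linarith
      then show ?thesis using G_nonneg[of m "i - 1"] False by simp
    qed
  qed simp
  then show ?thesis by simp
qed

lemma G_0: "G m 0 = 1" by (induct m) simp_all


lemma SP_0: "SP 0 = {\<lambda>_. 0}"
  by (auto simp: signed_perms_def bij_betw_def)

lemma B_poly_0: "B_poly 0 = 1"
  by (simp add: B_poly_def SP_0 desB_def)

lemma B_rec: "B_poly (Suc m) = L m (B_poly m)"
proof -
  have "B_poly (Suc m) = (\<Sum>\<sigma>\<in>SP m. L m (monom 1 (desB m \<sigma>)))"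
    unfolding B_poly_Suc by (rule sum.cong) (simp_all add: L_monom desB_le)
  also have "\<dots> = L m (B_poly m)" by (simp add: B_poly_def L_sum)
  finally show ?thesis .
qed

definition pp :: "nat \<Rightarrow> nat \<Rightarrow> int poly" where
  "pp n i = XX^i * (1+XX)^(n - 2*i)"

lemma B_exp: "B_poly n = (\<Sum>i\<le>n. smult (G n i) (pp n i))"
proof (induction n)
  case 0 then show ?case by (simp add: B_poly_0 pp_def)
next
  case (Suc m)
  have "B_poly (Suc m) = (\<Sum>i\<le>m. smult (G m i) (L m (pp m i)))"
    by (simp add: B_rec Suc L_sum L_smult)
  also have "\<dots> = (\<Sum>i\<le>m. smult ((2 * int i + 1) * G m i) (pp (Suc m) i)
       + smult (4 * (int m - 2 * int i) * G m i) (pp (Suc m) (Suc i)))"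
  proof (rule sum.cong)
    fix i assume "i \<in> {..m}"
    show "smult (G m i) (L m (pp m i)) = smult ((2 * int i + 1) * G m i) (pp (Suc m) i)
       + smult (4 * (int m - 2 * int i) * G m i) (pp (Suc m) (Suc i))"
    proof (cases "2 * i \<le> m")
      case True
      then show ?thesis unfolding pp_def L_p[OF True] by (simp add: smult_add_right mult.commute)
    next
      case False
      then have "G m i = 0" by (intro G_zero) linarith
      then show ?thesis by simp
    qed
  qed simp
  also have "\<dots> = (\<Sum>i\<le>m. smult ((2 * int i + 1) * G m i) (pp (Suc m) i))
       + (\<Sum>i\<le>m. smult (4 * (int m - 2 * int i) * G m i) (pp (Suc m) (Suc i)))"
    by (rule sum.distrib)
  also have "(\<Sum>i\<le>m. smult ((2 * int i + 1) * G m i) (pp (Suc m) i))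
      = (\<Sum>i\<le>Suc m. smult ((2 * int i + 1) * G m i) (pp (Suc m) i))"
    using G_zero[of m "Suc m"] by simp
  also have "(\<Sum>i\<le>m. smult (4 * (int m - 2 * int i) * G m i) (pp (Suc m) (Suc i)))
      = (\<Sum>i\<le>Suc m. smult (if i = 0 then 0 else 4 * (int m + 2 - 2 * int i) * G m (i - 1)) (pp (Suc m) i))"
    by (simp only: sum.atMost_Suc_shift) (simp add: algebra_simps)
  also have "(\<Sum>i\<le>Suc m. smult ((2 * int i + 1) * G m i) (pp (Suc m) i))
      + (\<Sum>i\<le>Suc m. smult (if i = 0 then 0 else 4 * (int m + 2 - 2 * int i) * G m (i - 1)) (pp (Suc m) i))
      = (\<Sum>i\<le>Suc m. smult (G (Suc m) i) (pp (Suc m) i))"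
    by (simp only: sum.distrib[symmetric] smult_add_left[symmetric] G.simps)
  finally show ?case .
qed

lemma coeff_XX_pow_mult: "coeff (XX^j * q) i = (if i < j then 0 else coeff q (i - j))"
proof -
  have "XX^j = monom 1 j" by (simp add: monom_altdef XX_def)
  then show ?thesis by (simp add: coeff_monom_mult)
qed

lemma coeff_Y0: "coeff ((1+XX)^k) 0 = 1"
  by (simp add: poly_0_coeff_0[symmetric] XX_def)

lemma uniq:
  assumes "(\<Sum>i<N. smult (c i) (pp n i)) = 0"
  shows "i < N \<Longrightarrow> c i = 0"
proof (induction i rule: less_induct)
  case (less i)
  have "0 = coeff (\<Sum>j<N. smult (c j) (pp n j)) i" using assms by simp
  also have "\<dots> = (\<Sum>j<N. c j * coeff (pp n j) i)" by (simp add: coeff_sum)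
  also have "\<dots> = (\<Sum>j<N. if j = i then c i else 0)"
  proof (rule sum.cong)
    fix j assume j: "j \<in> {..<N}"
    consider "j < i" | "j = i" | "i < j" by linarith
    then show "c j * coeff (pp n j) i = (if j = i then c i else 0)"
    proof cases
      case 1 then show ?thesis using less.IH[of j] less.prems by simp
    next
      case 2 then show ?thesis by (simp add: pp_def coeff_XX_pow_mult coeff_Y0)
    next
      case 3 then show ?thesis by (simp add: pp_def coeff_XX_pow_mult)
    qed
  qed simp
  also have "\<dots> = c i" using less.prems by simp
  finally show ?case by simp
qed


lemma gammaB_eq: "gammaB n = map (G n) [0..<Suc (n div 2)]"
proof -
  define P where "P = (\<lambda>g :: int list. length g = n div 2 + 1 \<and>
      B_poly n = (\<Sum>i<length g. smult (g ! i) ([:0, 1:] ^ i * [:1, 1:] ^ (n - 2 * i))))"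
  have conv: "(\<Sum>i<length g. smult (g ! i) ([:0, 1:] ^ i * [:1, 1:] ^ (n - 2 * i)))
      = (\<Sum>i<length g. smult (g ! i) (pp n i))" for g :: "int list"
  proof -
    have "[:0,1::int:]^i * [:1,1:]^(n - 2*i) = pp n i" for i
      unfolding pp_def YY_eq XX_def ..
    then show ?thesis by simp
  qed
  have e: "B_poly n = (\<Sum>i<Suc (n div 2). smult (G n i) (pp n i))"
  proof -
    have "(\<Sum>i<Suc (n div 2). smult (G n i) (pp n i)) = (\<Sum>i\<le>n. smult (G n i) (pp n i))"
      by (rule sum.mono_neutral_left) (auto simp: G_zero)
    then show ?thesis using B_exp by simp
  qed
  have "(\<Sum>i<length (map (G n) [0..<Suc (n div 2)]). smult (map (G n) [0..<Suc (n div 2)] ! i) (pp n i))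
     = (\<Sum>i<Suc (n div 2). smult (G n i) (pp n i))"
    by (rule sum.cong) (auto simp del: upt_Suc)
  then have P0: "P (map (G n) [0..<Suc (n div 2)])"
    unfolding P_def conv using e by (simp del: upt_Suc)
  have "g = map (G n) [0..<Suc (n div 2)]" if "P g" for g
  proof -
    have len: "length g = Suc (n div 2)" using that P_def by simp
    have "B_poly n = (\<Sum>i<Suc (n div 2). smult (g ! i) (pp n i))"
      using that len unfolding P_def conv by simp
    then have "(\<Sum>i<Suc (n div 2). smult (g ! i - G n i) (pp n i)) = 0"
      using e by (simp add: smult_diff_left sum_subtractf)
    then have "g ! i - G n i = 0" if "i < Suc (n div 2)" for i
      using uniq[of "\<lambda>i. g ! i - G n i"] that by blast
    then show ?thesis using len by (intro nth_equalityI) (auto simp del: upt_Suc)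
  qed
  then have "(THE g. P g) = map (G n) [0..<Suc (n div 2)]" using P0 by (intro the_equality)
  then show ?thesis unfolding gammaB_def P_def by simp
qed

lemma gammaB_len: "length (gammaB n) = Suc (n div 2)" by (simp add: gammaB_eq)
lemma gammaB_nth:
  assumes "i < Suc (n div 2)" shows "gammaB n ! i = G n i"
proof -
  have l: "i < length [0..<Suc (n div 2)]" using assms by simp
  have "[0..<Suc (n div 2)] ! i = i" using assms by (subst nth_upt) simp_all
  then show ?thesis unfolding gammaB_eq nth_map[OF l] by simp
qed


lemma ineq1:
  assumes "int a \<le> G m i"
  shows "int (i + 1) * int a \<le> G (Suc m) i"
proof -
  have "int (i + 1) * int a \<le> int (i + 1) * G m i" using assms by (intro mult_left_mono) simp_all
  also have "\<dots> \<le> (2 * int i + 1) * G m i" using G_nonneg[of m i] by (intro mult_right_mono) simp_all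
  also have "\<dots> \<le> G (Suc m) i" by (rule G_mono)
  finally show ?thesis .
qed

lemma ineq2:
  assumes "int a \<le> G m i"
  shows "int a \<le> G (Suc m) i"
proof -
  have "int a \<le> 1 * G m i" using assms by simp
  also have "\<dots> \<le> (2 * int i + 1) * G m i" using G_nonneg[of m i] by (intro mult_right_mono) simp_all
  also have "\<dots> \<le> G (Suc m) i" by (rule G_mono)
  finally show ?thesis .
qed

theorem lemma2p5:
  fixes d n :: nat and g :: "int list"
  assumes "d \<ge> 1" and "n = 2 * d + 1"
  shows "(good d (gammaB (n - 2)) g \<longrightarrow> good d (gammaB (n - 1)) g) \<and>
         (good (d + 1) (gammaB (n - 1)) g \<longrightarrow> good (d + 1) (gammaB n) g)"
proof -
  have n2: "n - 2 = 2 * d - 1" and n1: "n - 1 = Suc (2 * d - 1)" and n1': "n - 1 = 2 * d"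
    and n0: "n = Suc (2 * d)" using assms by auto
  have dd: "Suc ((2 * d - 1) div 2) = d" using assms(1) by linarith
  have l1: "length (gammaB (n - 2)) = d" unfolding n2 gammaB_len dd ..
  have l2: "length (gammaB (n - 1)) = d + 1" unfolding n1' gammaB_len by simp
  have l3: "length (gammaB n) = d + 1" unfolding n0 gammaB_len by simp
  have f1: "gammaB (n - 2) ! i = G (2 * d - 1) i" if "i < d" for i
    unfolding n2 using that dd by (intro gammaB_nth) simp
  have f2: "gammaB (n - 1) ! i = G (Suc (2 * d - 1)) i" if "i < d + 1" for i
    unfolding n1 using that assms(1) by (intro gammaB_nth) linarith
  have f2': "gammaB (n - 1) ! i = G (2 * d) i" if "i < d + 1" for i
    unfolding n1' using that by (intro gammaB_nth) simp
  have f3: "gammaB n ! i = G (Suc (2 * d)) i" if "i < d + 1" for i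
    unfolding n0 using that by (intro gammaB_nth) simp
  have part1: "good d (gammaB (n - 1)) g" if "good d (gammaB (n - 2)) g"
  proof -
    have "good_a (d - 1) (gammaB (n - 2)) g" using that l1 by (simp add: good_def)
    then have lg0: "length g = d - 1 + 1" and gn: "g ! (d - 1) \<noteq> 0" and
      ex: "\<exists>hs :: nat list list.
        (\<forall>h\<in>set hs. length h = d - 1 + 1 \<and> FFK (d - 1) h \<and> (\<forall>i\<le>d - 1. int (h ! i) \<le> gammaB (n - 2) ! i)) \<and>
        (\<forall>i\<le>d - 1. g ! i = (\<Sum>h\<leftarrow>hs. int (h ! i)))"
      unfolding good_a_def by blast+
    have lg: "length g = d" using lg0 assms(1) by simp
    from ex obtain hs :: "nat list list" where
      h1: "\<forall>h\<in>set hs. length h = d - 1 + 1 \<and> FFK (d - 1) h \<and> (\<forall>i\<le>d - 1. int (h ! i) \<le> gammaB (n - 2) ! i)"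
      and h2: "\<forall>i\<le>d - 1. g ! i = (\<Sum>h\<leftarrow>hs. int (h ! i))" by blast
    have "good_b d (gammaB (n - 1)) g"
      unfolding good_b_def
    proof (intro conjI exI[of _ hs] ballI allI impI)
      show "length (gammaB (n - 1)) = d + 1" by (rule l2)
      show "length g = d" by (rule lg)
      show "g ! (d - 1) \<noteq> 0" by (rule gn)
    next
      fix h assume h: "h \<in> set hs"
      show "length h = d" using h1 h assms(1) by auto
      show "FFK (d - 1) h" using h1 h by auto
    next
      fix h i assume h: "h \<in> set hs" and i: "i < d"
      have i1: "i \<le> d - 1" using i by simp
      have "int (h ! i) \<le> gammaB (n - 2) ! i" using h1 h i1 by blast
      then have "int (h ! i) \<le> G (2 * d - 1) i" using f1[OF i] by simp
      then have "int (i + 1) * int (h ! i) \<le> G (Suc (2 * d - 1)) i" by (rule ineq1)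
      moreover have "gammaB (n - 1) ! i = G (Suc (2 * d - 1)) i" using f2[of i] i by simp
      ultimately show "int (i + 1) * int (h ! i) \<le> gammaB (n - 1) ! i" by simp
    next
      fix i assume i: "i < d"
      show "g ! i = (\<Sum>h\<leftarrow>hs. int (h ! i))" using h2 i by auto
    qed
    then show ?thesis using l2 by (simp add: good_def)
  qed
  have part2: "good (d + 1) (gammaB n) g" if "good (d + 1) (gammaB (n - 1)) g"
  proof -
    have "good_a d (gammaB (n - 1)) g" using that l2 by (simp add: good_def)
    then have lg: "length g = d + 1" and gn: "g ! d \<noteq> 0" and
      ex: "\<exists>hs :: nat list list.
        (\<forall>h\<in>set hs. length h = d + 1 \<and> FFK d h \<and> (\<forall>i\<le>d. int (h ! i) \<le> gammaB (n - 1) ! i)) \<and>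
        (\<forall>i\<le>d. g ! i = (\<Sum>h\<leftarrow>hs. int (h ! i)))"
      unfolding good_a_def by blast+
    from ex obtain hs :: "nat list list" where
      h1: "\<forall>h\<in>set hs. length h = d + 1 \<and> FFK d h \<and> (\<forall>i\<le>d. int (h ! i) \<le> gammaB (n - 1) ! i)"
      and h2: "\<forall>i\<le>d. g ! i = (\<Sum>h\<leftarrow>hs. int (h ! i))" by blast
    have "good_a d (gammaB n) g"
      unfolding good_a_def
    proof (intro conjI exI[of _ hs] ballI allI impI)
      show "length (gammaB n) = d + 1" by (rule l3)
      show "length g = d + 1" by (rule lg)
      show "g ! d \<noteq> 0" by (rule gn)
    next
      fix h assume h: "h \<in> set hs"
      show "length h = d + 1" using h1 h by auto
      show "FFK d h" using h1 h by auto
    next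
      fix h i assume h: "h \<in> set hs" and i: "i \<le> d"
      have "int (h ! i) \<le> gammaB (n - 1) ! i" using h1 h i by blast
      then have "int (h ! i) \<le> G (2 * d) i" using f2'[of i] i by simp
      then have "int (h ! i) \<le> G (Suc (2 * d)) i" by (rule ineq2)
      moreover have "gammaB n ! i = G (Suc (2 * d)) i" using f3[of i] i by simp
      ultimately show "int (h ! i) \<le> gammaB n ! i" by simp
    next
      fix i assume i: "i \<le> d"
      show "g ! i = (\<Sum>h\<leftarrow>hs. int (h ! i))" using h2 i by auto
    qed
    then show ?thesis using l3 by (simp add: good_def)
  qed
  show ?thesis using part1 part2 by blast
qed


end
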